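(* (1) For every nilpotent $n\times n$ matrix $A$ over $\mathbb{F}$ and every integer $k$ with $0\le k\le n/2$, there exists an $n\times n$ matrix $B$ commuting with $A$ such that $B^2=0$ and $\mathrm{rk}\,B=k$. (2) If $A$ and $B$ are nilpotent $n\times n$ matrices over $\mathbb{F}$, then for each integer $k$ with $0\le k\le n/2$ there exist an $n\times n$ matrix $C$ with $C^2=0$ and $\mathrm{rk}\,C=k$, and an invertible $P\in GL_n(\mathbb{F})$, such that $C$ commutes with $A$ and $PCP^{-1}$ commutes with $B$.
   Context: $\mathbb{F}$ is an algebraically closed field of characteristic $0$. *)

theory Defs
  imports "Jordan_Normal_Form.DL_Rank" "HOL-Computational_Algebra.Polynomial"
begin

definition nilpotent_mat :: "'a :: semiring_1 mat \<Rightarrow> bool" where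
  "nilpotent_mat A \<longleftrightarrow> (\<exists>m. A ^\<^sub>m m = 0\<^sub>m (dim_row A) (dim_col A))"

end

theory Submission
  imports Defs "Jordan_Normal_Form.Jordan_Normal_Form_Existence" "Jordan_Normal_Form.Jordan_Normal_Form_Uniqueness"
begin

lemma rank_plus_kernel_dim:
  fixes M :: "'a :: field mat"
  assumes M: "M \<in> carrier_mat n n"
  shows "vec_space.rank n M + kernel.dim n M = n"
proof -
  interpret V: vec_space "TYPE('a)" n .
  interpret K: kernel n n M by (unfold_locales, rule M)
  interpret L: linear_map class_ring V.V V.V "\<lambda>v. M *\<^sub>v v"
  proof (intro_locales)
    show "mod_hom_axioms class_ring V.V V.V (\<lambda>v. M *\<^sub>v v)"
      unfolding mod_hom_axioms_def LinearCombinations.module_hom_def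
      using M by (auto simp: mult_add_distrib_mat_vec mult_mat_vec)
  qed
  have im: "L.im = V.col_space M"
    unfolding L.im_def V.col_space_eq[OF M] using M by auto
  have ker: "L.ker = mat_kernel M"
    unfolding L.ker_def mat_kernel_def using M by auto
  have "vectorspace.dim class_ring (V.vs L.im) + vectorspace.dim class_ring (V.vs L.ker) = V.dim"
    by (rule L.rank_nullity_main(1), simp)
  thus ?thesis unfolding im ker V.dim_is_n V.rank_def V.col_space_def by simp
qed

lemma sum_mult_delta_right[simp]:
  "(\<Sum>ia = 0..<(n::nat). f ia * (if ia = k then 1 else 0)) = (if k < n then f k else (0::'b::semiring_1))"
proof -
  have "(\<Sum>ia = 0..<n. f ia * (if ia = k then 1 else 0)) = (\<Sum>ia = 0..<n. if ia = k then f ia else 0)"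
    by (rule sum.cong, auto)
  thus ?thesis by (simp add: sum.delta)
qed

lemma det_pow_mat: assumes A: "(A :: 'a :: comm_ring_1 mat) \<in> carrier_mat n n"
  shows "det (A ^\<^sub>m k) = det A ^ k"
proof (induct k)
  case 0 then show ?case using A by simp
next
  case (Suc k)
  have "det (A ^\<^sub>m Suc k) = det (A ^\<^sub>m k * A)" by simp
  also have "\<dots> = det (A ^\<^sub>m k) * det A" by (rule det_mult[OF pow_carrier_mat[OF A] A])
  finally show ?case using Suc by simp
qed

lemma nilpotent_kernel_vec:
  assumes A: "(A :: 'a :: field mat) \<in> carrier_mat n n" and n: "n > 0"
    and nil: "A ^\<^sub>m m = 0\<^sub>m n n"
  shows "\<exists>v. v \<in> carrier_vec n \<and> v \<noteq> 0\<^sub>v n \<and> A *\<^sub>v v = 0\<^sub>v n"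
proof -
  have "det A = 0"
  proof (rule ccontr)
    assume "det A \<noteq> 0"
    hence "det (A ^\<^sub>m m) \<noteq> 0" unfolding det_pow_mat[OF A] by simp
    with nil n show False by simp
  qed
  thus ?thesis using det_0_iff_vec_prod_zero_field[OF A] by blast
qed

lemma det_nonzero_inv:
  assumes A: "(A :: 'a :: field mat) \<in> carrier_mat n n" and d: "det A \<noteq> 0"
  shows "\<exists>B. B \<in> carrier_mat n n \<and> A * B = 1\<^sub>m n \<and> B * A = 1\<^sub>m n"
proof -
  from det_non_zero_imp_unit[OF A d, unfolded Units_def, of "()"]
  obtain B where B: "B \<in> carrier_mat n n" and BA: "B * A = 1\<^sub>m n" and AB: "A * B = 1\<^sub>m n"
    by (auto simp: ring_mat_def)
  thus ?thesis by blast
qed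

lemma first_col_invertible:
  assumes v: "(v :: 'a :: field vec) \<in> carrier_vec n" and v0: "v \<noteq> 0\<^sub>v n"
  shows "\<exists>P Q. P \<in> carrier_mat n n \<and> Q \<in> carrier_mat n n \<and> P * Q = 1\<^sub>m n \<and> Q * P = 1\<^sub>m n
     \<and> P *\<^sub>v unit_vec n 0 = v"
proof -
  from v v0 obtain i where i: "i < n" and vi: "v $ i \<noteq> 0" by (metis eq_vecI carrier_vecD index_zero_vec)
  hence n: "n > 0" by auto
  define S where "S = (swaprows_mat n 0 i :: 'a mat)"
  have S: "S \<in> carrier_mat n n" unfolding S_def by simp
  have SS: "S * S = 1\<^sub>m n" unfolding S_def by (rule swaprows_mat_inv[OF n i])
  define w where "w = S *\<^sub>v v"
  have w: "w \<in> carrier_vec n" unfolding w_def using S v by simp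
  have w0: "w $ 0 = v $ i"
  proof -
    have "w $ 0 = (\<Sum>ia = 0..<n. (if i = ia \<or> ia = 0 \<and> i = 0 then 1 else 0) * v $ ia)"
      unfolding w_def S_def using v i n
      by (simp add: mult_mat_vec_def row_def scalar_prod_def swaprows_mat_def)
    also have "\<dots> = (\<Sum>ia = 0..<n. if ia = i then v $ ia else 0)"
      by (rule sum.cong, auto)
    finally show ?thesis using i by simp
  qed
  define R where "R = mat n n (\<lambda>(r,c). if c = 0 then w $ r else if r = c then 1 else (0::'a))"
  have R: "R \<in> carrier_mat n n" unfolding R_def by simp
  have "det R = prod_list (diag_mat R)"
    by (rule det_lower_triangular[OF _ R], auto simp: R_def)
  also have "\<dots> = (\<Prod> r = 0 ..< n. R $$ (r,r))" unfolding prod_list_diag_prod using R by simp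
  also have "\<dots> = (\<Prod> r = 0 ..< n. if r = 0 then w $ 0 else 1)"
    by (rule prod.cong, auto simp: R_def)
  also have "\<dots> = w $ 0" using n by (simp add: prod.delta')
  finally have "det R \<noteq> 0" using w0 vi by simp
  from det_nonzero_inv[OF R this] obtain R' where R': "R' \<in> carrier_mat n n"
    and RR': "R * R' = 1\<^sub>m n" "R' * R = 1\<^sub>m n" by blast
  have Re: "R *\<^sub>v unit_vec n 0 = w"
    by (rule eq_vecI, insert w n, auto simp: R_def mult_mat_vec_def scalar_prod_def unit_vec_def
        sum.delta' cong: if_cong)
  define P where "P = S * R"
  define Q where "Q = R' * S"
  have P: "P \<in> carrier_mat n n" "Q \<in> carrier_mat n n" unfolding P_def Q_def using S R R' by auto
  have "P * Q = S * (R * R') * S" unfolding P_def Q_def using S R R'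
    by (simp add: assoc_mult_mat[of _ n n _ n _ n])
  also have "\<dots> = 1\<^sub>m n" unfolding RR' using S SS by simp
  finally have PQ: "P * Q = 1\<^sub>m n" .
  have "Q * P = R' * (S * S) * R" unfolding P_def Q_def using S R R'
    by (simp add: assoc_mult_mat[of _ n n _ n _ n])
  also have "\<dots> = 1\<^sub>m n" unfolding SS RR' using R R' RR' by simp
  finally have QP: "Q * P = 1\<^sub>m n" .
  have "P *\<^sub>v unit_vec n 0 = S *\<^sub>v (R *\<^sub>v unit_vec n 0)" unfolding P_def using S R by simp
  also have "\<dots> = (S * S) *\<^sub>v v" unfolding Re w_def using S v by simp
  also have "\<dots> = v" unfolding SS using v by simp
  finally show ?thesis using P PQ QP by blast
qed

lemma four_block_ut_pow:
  assumes A1: "A1 \<in> carrier_mat k k" and B: "B \<in> carrier_mat k l" and D: "D \<in> carrier_mat l l"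
  shows "\<exists>X. X \<in> carrier_mat k l \<and>
    (four_block_mat A1 B (0\<^sub>m l k) D) ^\<^sub>m m = four_block_mat (A1 ^\<^sub>m m) X (0\<^sub>m l k) (D ^\<^sub>m m)"
proof (induct m)
  case 0
  show ?case using A1 D
    by (intro exI[of _ "0\<^sub>m k l"], auto simp: four_block_one_mat[symmetric] simp del: four_block_one_mat)
next
  case (Suc m)
  then obtain X where X: "X \<in> carrier_mat k l" and
    eq: "(four_block_mat A1 B (0\<^sub>m l k) D) ^\<^sub>m m = four_block_mat (A1 ^\<^sub>m m) X (0\<^sub>m l k) (D ^\<^sub>m m)" by blast
  have "(four_block_mat A1 B (0\<^sub>m l k) D) ^\<^sub>m Suc m =
     four_block_mat (A1 ^\<^sub>m m) X (0\<^sub>m l k) (D ^\<^sub>m m) * four_block_mat A1 B (0\<^sub>m l k) D"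
    using eq by simp
  also have "\<dots> = four_block_mat (A1 ^\<^sub>m m * A1 + X * 0\<^sub>m l k) (A1 ^\<^sub>m m * B + X * D)
     (0\<^sub>m l k * A1 + D ^\<^sub>m m * 0\<^sub>m l k) (0\<^sub>m l k * B + D ^\<^sub>m m * D)"
    by (rule mult_four_block_mat, insert A1 B D X, auto)
  also have "\<dots> = four_block_mat (A1 ^\<^sub>m Suc m) (A1 ^\<^sub>m m * B + X * D) (0\<^sub>m l k) (D ^\<^sub>m Suc m)"
  proof -
    have e1: "A1 ^\<^sub>m m * A1 + X * 0\<^sub>m l k = A1 ^\<^sub>m Suc m" using A1 X
      by (simp, intro right_add_zero_mat[of _ k k], auto)
    have e2: "0\<^sub>m l k * A1 + D ^\<^sub>m m * 0\<^sub>m l k = 0\<^sub>m l k" using A1 D by simp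
    have e3: "0\<^sub>m l k * B + D ^\<^sub>m m * D = D ^\<^sub>m Suc m" using B D
      by (simp, intro left_add_zero_mat[of _ l l], auto)
    show ?thesis unfolding e1 e2 e3 ..
  qed
  finally show ?case using A1 B D X by (intro exI[of _ "A1 ^\<^sub>m m * B + X * D"], auto)
qed

lemma nilpotent_strict_upper:
  assumes A: "(A :: 'a :: field mat) \<in> carrier_mat n n" and nil: "A ^\<^sub>m m = 0\<^sub>m n n"
  shows "\<exists>T. T \<in> carrier_mat n n \<and> similar_mat A T \<and> (\<forall>i<n. \<forall>j\<le>i. T $$ (i,j) = 0)"
  using A nil
proof (induct n arbitrary: A)
  case 0
  thus ?case by (intro exI[of _ A], auto intro: similar_mat_refl)
next
  case (Suc n A)
  note A = Suc(2) note nil = Suc(3)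
  from nilpotent_kernel_vec[OF A _ nil] obtain v where v: "v \<in> carrier_vec (Suc n)"
    and v0: "v \<noteq> 0\<^sub>v (Suc n)" and Av: "A *\<^sub>v v = 0\<^sub>v (Suc n)" by auto
  from first_col_invertible[OF v v0] obtain P Q where P: "P \<in> carrier_mat (Suc n) (Suc n)"
    and Q: "Q \<in> carrier_mat (Suc n) (Suc n)" and PQ: "P * Q = 1\<^sub>m (Suc n)" and QP: "Q * P = 1\<^sub>m (Suc n)"
    and Pe: "P *\<^sub>v unit_vec (Suc n) 0 = v" by auto
  define A' where "A' = Q * A * P"
  have A': "A' \<in> carrier_mat (Suc n) (Suc n)" unfolding A'_def using P Q A by auto
  have "P * A' * Q = (P * Q) * A * (P * Q)" unfolding A'_def using P Q A
    by (simp add: assoc_mult_mat[of _ "Suc n" "Suc n" _ "Suc n" _ "Suc n"])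
  hence AA': "A = P * A' * Q" unfolding PQ using A by simp
  have wit: "similar_mat_wit A A' P Q"
    by (rule similar_mat_witI[OF PQ QP AA' A A' P Q])
  have "A' ^\<^sub>m m = Q * A ^\<^sub>m m * P"
  proof -
    have w2: "similar_mat_wit A' A Q P"
      by (rule similar_mat_witI[OF QP PQ _ A' A Q P], simp add: A'_def)
    show ?thesis by (rule similar_mat_wit_pow_id[OF w2])
  qed
  hence nil': "A' ^\<^sub>m m = 0\<^sub>m (Suc n) (Suc n)" unfolding nil using P Q by simp
  have col0: "A' $$ (i, 0) = 0" if i: "i < Suc n" for i
  proof -
    have "A' *\<^sub>v unit_vec (Suc n) 0 = (Q * A) *\<^sub>v (P *\<^sub>v unit_vec (Suc n) 0)"
      unfolding A'_def by (rule assoc_mult_mat_vec, insert P Q A, auto)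
    also have "\<dots> = Q *\<^sub>v (A *\<^sub>v (P *\<^sub>v unit_vec (Suc n) 0))"
      by (rule assoc_mult_mat_vec, insert P Q A, auto)
    also have "\<dots> = 0\<^sub>v (Suc n)" unfolding Pe Av using Q
      by (intro eq_vecI, auto simp: mult_mat_vec_def)
    finally have "(A' *\<^sub>v unit_vec (Suc n) 0) $ i = 0" using i by simp
    thus ?thesis using A' i
      apply (simp add: mult_mat_vec_def row_def scalar_prod_def unit_vec_def)
      by (cases "n = 0", auto)
  qed
  obtain a1 a2 a3 a4 where sb: "split_block A' 1 1 = (a1, a2, a3, a4)" by (cases "split_block A' 1 1")
  note spl = split_block[OF sb, of n n] 
  have c: "a1 \<in> carrier_mat 1 1" "a2 \<in> carrier_mat 1 n" "a3 \<in> carrier_mat n 1" "a4 \<in> carrier_mat n n"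
    and A'eq: "A' = four_block_mat a1 a2 a3 a4" using spl A' by auto
  have a1: "a1 = 0\<^sub>m 1 1" using sb col0 A' unfolding split_block_def Let_def by (auto intro!: eq_matI)
  have a3: "a3 = 0\<^sub>m n 1" using sb col0 A' unfolding split_block_def Let_def by (auto intro!: eq_matI)
  from four_block_ut_pow[OF c(1) c(2) c(4), of m] obtain X where X: "X \<in> carrier_mat 1 n"
    and pw: "(four_block_mat a1 a2 (0\<^sub>m n 1) a4) ^\<^sub>m m = four_block_mat (a1 ^\<^sub>m m) X (0\<^sub>m n 1) (a4 ^\<^sub>m m)"
    by blast
  have nil4: "a4 ^\<^sub>m m = 0\<^sub>m n n"
  proof (rule eq_matI)
    fix i j assume i: "i < dim_row (0\<^sub>m n n :: 'a mat)" and j: "j < dim_col (0\<^sub>m n n :: 'a mat)"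
    have "four_block_mat (a1 ^\<^sub>m m) X (0\<^sub>m n 1) (a4 ^\<^sub>m m) $$ (Suc i, Suc j) = 0"
      using pw[symmetric] nil' A'eq a3 i j by simp
    moreover have "dim_row a1 = 1" "dim_col a1 = 1" "dim_row (a1 ^\<^sub>m m) = 1" "dim_col (a1 ^\<^sub>m m) = 1" using c by auto
    ultimately show "(a4 ^\<^sub>m m) $$ (i, j) = 0\<^sub>m n n $$ (i, j)" using i j c X by simp
  qed (insert c, auto)
  from Suc(1)[OF c(4) nil4] obtain T' where T': "T' \<in> carrier_mat n n" and sim': "similar_mat a4 T'"
    and ut': "\<forall>i<n. \<forall>j\<le>i. T' $$ (i, j) = 0" by blast
  from sim' obtain P2 Q2 where w2: "similar_mat_wit a4 T' P2 Q2" unfolding similar_mat_def by blast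
  from similar_mat_witD2[OF c(4) w2] have P2: "P2 \<in> carrier_mat n n" and Q2: "Q2 \<in> carrier_mat n n"
    and PQ2: "P2 * Q2 = 1\<^sub>m n" "Q2 * P2 = 1\<^sub>m n" by auto
  have w1: "similar_mat_wit a1 a1 (1\<^sub>m 1) (1\<^sub>m 1)" using c by (intro similar_mat_witI, auto)
  have URA: "a2 = 1\<^sub>m 1 * (a2 * P2) * Q2" using c P2 Q2 PQ2
    by (simp add: assoc_mult_mat[of _ 1 n _ n _ n])
  have LLA: "a3 = P2 * 0\<^sub>m n 1 * 1\<^sub>m 1" using a3 P2 by simp
  have wit2: "similar_mat_wit (four_block_mat a1 a2 a3 a4) (four_block_mat a1 (a2 * P2) (0\<^sub>m n 1) T')
    (four_block_mat (1\<^sub>m 1) (0\<^sub>m 1 n) (0\<^sub>m n 1) P2) (four_block_mat (1\<^sub>m 1) (0\<^sub>m 1 n) (0\<^sub>m n 1) Q2)"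
    by (rule similar_mat_witI[OF _ _ _ _ _ _ _] similar_mat_wit_four_block[OF w1 w2 URA LLA c(1) c(4) zero_carrier_mat],
      insert c P2, auto)
  define T where "T = four_block_mat a1 (a2 * P2) (0\<^sub>m n 1) T'"
  have T: "T \<in> carrier_mat (Suc n) (Suc n)" unfolding T_def using c T' P2 by auto
  have "similar_mat A T"
    using similar_mat_trans[of A A' T] wit wit2 A'eq unfolding similar_mat_def T_def by blast
  moreover have "\<forall>i<Suc n. \<forall>j\<le>i. T $$ (i, j) = 0"
  proof (intro allI impI)
    fix i j assume i: "i < Suc n" and j: "j \<le> i"
    show "T $$ (i,j) = 0"
    proof (cases "i = 0")
      case True thus ?thesis using j c a1 T' P2 unfolding T_def by simp
    next
      case False
      show ?thesis
      proof (cases "j = 0")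
        case True thus ?thesis using i False c T' P2 unfolding T_def by simp
      next
        case False2: False
        thus ?thesis using i j False c T' P2 ut' unfolding T_def by simp
      qed
    qed
  qed
  ultimately show ?case using T by blast
qed

lemma poly_prod_list_root:
  assumes "x \<in> set xs" and "poly (f x) (a :: 'a :: idom) = 0"
  shows "poly (prod_list (map f xs)) a = 0"
  using assms by (induct xs, auto)

lemma nilpotent_jordan:
  assumes A: "(A :: 'a :: field mat) \<in> carrier_mat n n" and nil: "A ^\<^sub>m m = 0\<^sub>m n n"
  shows "\<exists>bs. similar_mat A (jordan_matrix bs) \<and> (\<forall>x \<in> set bs. snd x = 0 \<and> fst x > 0)
     \<and> sum_list (map fst bs) = n"
proof -
  from nilpotent_strict_upper[OF A nil] obtain T where T: "T \<in> carrier_mat n n"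
    and sim: "similar_mat A T" and st: "\<forall>i<n. \<forall>j\<le>i. T $$ (i, j) = 0" by blast
  have ut: "upper_triangular T" using T st by (auto simp: upper_triangular_def)
  define bs where "bs = triangular_to_jnf_vector T"
  have jnf: "jordan_nf T bs" unfolding bs_def by (rule triangular_to_jnf_vector[OF T ut])
  hence bs0: "0 \<notin> fst ` set bs" and simJ: "similar_mat T (jordan_matrix bs)"
    unfolding jordan_nf_def by auto
  have cp1: "char_poly T = (\<Prod> a \<leftarrow> diag_mat T. [:- a, 1:])" by (rule char_poly_upper_triangular[OF T ut])
  have dT: "diag_mat T = replicate n 0" using T st unfolding diag_mat_def
    by (intro nth_equalityI, auto)
  have cp2: "char_poly T = (\<Prod> (n,a) \<leftarrow> bs. [:- a, 1:] ^ n)" by (rule jordan_nf_char_poly[OF jnf])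
  have ev: "snd x = 0" if x: "x \<in> set bs" for x
  proof (rule ccontr)
    obtain s a where xsa: "x = (s,a)" by force
    assume "snd x \<noteq> 0" hence a: "a \<noteq> 0" using xsa by simp
    from x bs0 xsa have s: "s > 0" by force
    have "poly (char_poly T) a = 0" unfolding cp2
      by (rule poly_prod_list_root[OF x[unfolded xsa]], insert s, auto)
    moreover have "poly (char_poly T) a = a ^ n" unfolding cp1 dT
      by (induct n, auto)
    ultimately show False using a by simp
  qed
  from similar_matD[OF simJ] T have "jordan_matrix bs \<in> carrier_mat n n" by auto
  hence "sum_list (map fst bs) = n" by auto
  moreover have "\<forall>x \<in> set bs. snd x = 0 \<and> fst x > 0" using ev bs0 by force
  ultimately show ?thesis using similar_mat_trans[OF sim simJ] by blast
qed

lemma similar_swap_four_block: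
  assumes A: "(A :: 'a :: comm_ring_1 mat) \<in> carrier_mat n n" and B: "B \<in> carrier_mat m m"
  shows "similar_mat (four_block_mat A (0\<^sub>m n m) (0\<^sub>m m n) B) (four_block_mat B (0\<^sub>m m n) (0\<^sub>m n m) A)"
proof -
  define P where "P = (four_block_mat (0\<^sub>m n m) (1\<^sub>m n) (1\<^sub>m m) (0\<^sub>m m n) :: 'a mat)"
  define Q where "Q = (four_block_mat (0\<^sub>m m n) (1\<^sub>m m) (1\<^sub>m n) (0\<^sub>m n m) :: 'a mat)"
  have "P \<in> carrier_mat (n+m) (m+n)" unfolding P_def by simp
  hence P: "P \<in> carrier_mat (n+m) (n+m)" by (simp only: add.commute[of m n])
  have "Q \<in> carrier_mat (m+n) (n+m)" unfolding Q_def by simp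
  hence Q: "Q \<in> carrier_mat (n+m) (n+m)" by (simp only: add.commute[of m n])
  have PQ: "P * Q = 1\<^sub>m (n+m)" unfolding P_def Q_def
    by (subst mult_four_block_mat[OF zero_carrier_mat one_carrier_mat one_carrier_mat zero_carrier_mat zero_carrier_mat one_carrier_mat one_carrier_mat zero_carrier_mat], simp_all)
  have QP: "Q * P = 1\<^sub>m (m+n)" unfolding P_def Q_def
    by (subst mult_four_block_mat[OF zero_carrier_mat one_carrier_mat one_carrier_mat zero_carrier_mat zero_carrier_mat one_carrier_mat one_carrier_mat zero_carrier_mat], simp_all)
  hence QP: "Q * P = 1\<^sub>m (n+m)" by (simp only: add.commute[of m n])
  have "P * four_block_mat B (0\<^sub>m m n) (0\<^sub>m n m) A = four_block_mat (0\<^sub>m n m) A B (0\<^sub>m m n)"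
    unfolding P_def
    by (subst mult_four_block_mat[OF zero_carrier_mat one_carrier_mat one_carrier_mat zero_carrier_mat B zero_carrier_mat zero_carrier_mat A], insert A B, simp_all)
  hence "P * four_block_mat B (0\<^sub>m m n) (0\<^sub>m n m) A * Q = four_block_mat (0\<^sub>m n m) A B (0\<^sub>m m n) * Q"
    by simp
  also have "\<dots> = four_block_mat A (0\<^sub>m n m) (0\<^sub>m m n) B"
    unfolding Q_def
    by (subst mult_four_block_mat[OF zero_carrier_mat A B zero_carrier_mat zero_carrier_mat one_carrier_mat one_carrier_mat zero_carrier_mat], insert A B, simp_all)
  finally have eq: "four_block_mat A (0\<^sub>m n m) (0\<^sub>m m n) B = P * four_block_mat B (0\<^sub>m m n) (0\<^sub>m n m) A * Q" ..
  have "four_block_mat B (0\<^sub>m m n) (0\<^sub>m n m) A \<in> carrier_mat (m+n) (m+n)" using A B by simp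
  hence FB: "four_block_mat B (0\<^sub>m m n) (0\<^sub>m n m) A \<in> carrier_mat (n+m) (n+m)"
    by (simp only: add.commute[of m n])
  have FA: "four_block_mat A (0\<^sub>m n m) (0\<^sub>m m n) B \<in> carrier_mat (n+m) (n+m)" using A B by simp
  show ?thesis
    by (rule similar_matI[of _ _ P Q "n+m"], insert FA FB P Q PQ QP eq, simp_all)
qed

abbreviation FBd :: "'a :: zero mat \<Rightarrow> 'a mat \<Rightarrow> 'a mat" where
  "FBd X Y \<equiv> four_block_mat X (0\<^sub>m (dim_row X) (dim_col Y)) (0\<^sub>m (dim_row Y) (dim_col X)) Y"

lemma diag_block_mat_Cons': "diag_block_mat (A # As) = FBd A (diag_block_mat As)"
  by (simp add: Let_def)

lemma diag_block_mat_append': "diag_block_mat (As @ Bs) = FBd (diag_block_mat As) (diag_block_mat Bs)"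
  by (simp add: diag_block_mat_append Let_def)

lemma FBd_assoc: "FBd A (FBd B C) = FBd (FBd A B) C"
  using assoc_four_block_mat[of A B C] by simp

lemma diag_block_square_carrier:
  assumes "\<forall>M \<in> set xs. square_mat M"
  shows "diag_block_mat xs \<in> carrier_mat (sum_list (map dim_row xs)) (sum_list (map dim_row xs))"
proof -
  have "sum_list (map dim_col xs) = sum_list (map dim_row xs)"
    using assms by (induct xs, auto simp: square_mat.simps)
  thus ?thesis unfolding carrier_mat_def by (simp add: dim_diag_block_mat)
qed

lemma similar_FBd_swap:
  assumes A: "(A :: 'a :: comm_ring_1 mat) \<in> carrier_mat n n" and B: "B \<in> carrier_mat m m"
  shows "similar_mat (FBd A B) (FBd B A)"
  using similar_swap_four_block[OF A B] A B by simp

lemma similar_FBd_cong: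
  assumes "similar_mat (A :: 'a :: comm_ring_1 mat) A'" "similar_mat B B'"
  shows "similar_mat (FBd A B) (FBd A' B')"
proof -
  from similar_matD[OF assms(1)] obtain n where A: "A \<in> carrier_mat n n" and A': "A' \<in> carrier_mat n n" by auto
  from similar_matD[OF assms(2)] obtain m where B: "B \<in> carrier_mat m m" and B': "B' \<in> carrier_mat m m" by auto
  show ?thesis using similar_mat_four_block_0_0[OF assms A B] A B A' B' by simp
qed

lemma similar_diag_block_move:
  assumes sq: "\<forall>M \<in> set (xs @ x # ys). square_mat (M :: 'a :: comm_ring_1 mat)"
  shows "similar_mat (diag_block_mat (xs @ x # ys)) (diag_block_mat (x # xs @ ys))"
proof -
  let ?X = "diag_block_mat xs" let ?Y = "diag_block_mat ys"
  have X: "?X \<in> carrier_mat (sum_list (map dim_row xs)) (sum_list (map dim_row xs))"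
    by (rule diag_block_square_carrier, insert sq, simp)
  have Y: "?Y \<in> carrier_mat (sum_list (map dim_row ys)) (sum_list (map dim_row ys))"
    by (rule diag_block_square_carrier, insert sq, simp)
  have "square_mat x" using sq by simp
  hence x: "x \<in> carrier_mat (dim_row x) (dim_row x)" unfolding carrier_mat_def by simp
  have "diag_block_mat (xs @ x # ys) = FBd ?X (FBd x ?Y)"
    unfolding diag_block_mat_append' diag_block_mat_Cons' ..
  also have "\<dots> = FBd (FBd ?X x) ?Y" by (rule FBd_assoc)
  finally have e1: "diag_block_mat (xs @ x # ys) = FBd (FBd ?X x) ?Y" .
  have "diag_block_mat (x # xs @ ys) = FBd x (FBd ?X ?Y)"
    unfolding diag_block_mat_append' diag_block_mat_Cons' ..
  also have "\<dots> = FBd (FBd x ?X) ?Y" by (rule FBd_assoc)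
  finally have e2: "diag_block_mat (x # xs @ ys) = FBd (FBd x ?X) ?Y" .
  have "similar_mat (FBd (FBd ?X x) ?Y) (FBd (FBd x ?X) ?Y)"
    by (rule similar_FBd_cong[OF similar_FBd_swap[OF X x] similar_mat_refl[OF Y]])
  thus ?thesis unfolding e1 e2 .
qed

lemma similar_diag_block_mset:
  assumes "mset As = mset Bs" and "\<forall>M \<in> set As. square_mat (M :: 'a :: comm_ring_1 mat)"
  shows "similar_mat (diag_block_mat As) (diag_block_mat Bs)"
  using assms
proof (induct As arbitrary: Bs)
  case Nil
  thus ?case by (auto intro: similar_mat_refl[of _ 0])
next
  case (Cons a As Bs)
  from Cons(2) have "a \<in> set Bs" by (metis list.set_intros(1) set_mset_mset)
  from split_list[OF this] obtain ys zs where Bs: "Bs = ys @ a # zs" by auto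
  have "set Bs = set (a # As)" using mset_eq_setD[OF Cons(2)] by simp
  hence sqB: "\<forall>M \<in> set Bs. square_mat M" using Cons(3) by simp
  have m: "mset As = mset (ys @ zs)" using Cons(2) unfolding Bs by simp
  have IH: "similar_mat (diag_block_mat As) (diag_block_mat (ys @ zs))"
    by (rule Cons(1)[OF m], insert Cons(3), simp)
  have "square_mat a" using Cons(3) by simp
  hence a: "a \<in> carrier_mat (dim_row a) (dim_row a)" unfolding carrier_mat_def by simp
  have s1: "similar_mat (diag_block_mat (a # As)) (diag_block_mat (a # ys @ zs))"
    unfolding diag_block_mat_Cons' by (rule similar_FBd_cong[OF similar_mat_refl[OF a] IH])
  have s2: "similar_mat (diag_block_mat (a # ys @ zs)) (diag_block_mat Bs)"
    unfolding Bs by (rule similar_mat_sym[OF similar_diag_block_move], insert sqB, unfold Bs)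
  show ?case by (rule similar_mat_trans[OF s1 s2])
qed

lemma similar_jordan_mset:
  assumes "mset bs = mset cs"
  shows "similar_mat (jordan_matrix (bs :: (nat \<times> 'a :: comm_ring_1) list)) (jordan_matrix cs)"
  unfolding jordan_matrix_def
proof (rule similar_diag_block_mset)
  show "mset (map (\<lambda>(n, a). jordan_block n a) bs) = mset (map (\<lambda>(n, a). jordan_block n a) cs)"
    unfolding mset_map assms ..
  show "\<forall>M\<in>set (map (\<lambda>(n, a). jordan_block n a) bs). square_mat M"
    by auto
qed

lemma kernel_dim_zero_mat: "kernel.dim n (0\<^sub>m n n :: 'a :: field mat) = n"
proof -
  have "vec_space.rank n (0\<^sub>m n n :: 'a mat) = 0" by (rule vec_space.rank_0I)
  thus ?thesis using rank_plus_kernel_dim[of "0\<^sub>m n n :: 'a mat" n] by simp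
qed

lemma char_matrix_0: assumes "A \<in> carrier_mat n n"
  shows "char_matrix A (0 :: 'a :: field) = A"
  unfolding char_matrix_def using assms by (intro eq_matI, auto)

lemma kernel_dim_jordan_pow_0:
  assumes ev: "\<forall>x \<in> set bs. snd x = (0 :: 'a :: field)"
  shows "kernel.dim (sum_list (map fst bs)) (jordan_matrix bs ^\<^sub>m k) = (\<Sum> n \<leftarrow> map fst bs. min k n)"
proof -
  have "filter (\<lambda>(n, e). e = 0) bs = bs" using ev by (induct bs, auto)
  hence "dim_gen_eigenspace (jordan_matrix bs) 0 k = (\<Sum> n \<leftarrow> map fst bs. min k n)"
    unfolding dim_gen_eigenspace_jordan_matrix by simp
  moreover have "char_matrix (jordan_matrix bs) 0 = jordan_matrix bs"
    by (rule char_matrix_0[OF jordan_matrix_carrier])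
  ultimately show ?thesis unfolding dim_gen_eigenspace_def kernel_dim_def by (cases k, simp_all add: jordan_matrix_dim)
qed

lemma mset_two_values:
  assumes "\<forall>x \<in> set bs. x = u \<or> x = v" and "u \<noteq> v"
  shows "mset bs = mset (replicate (length (filter ((=) u) bs)) u @ replicate (length (filter ((=) v) bs)) v)"
  using assms by (induct bs, auto)

lemma sum_min_le: "(\<Sum> n \<leftarrow> xs. min (k::nat) n) \<le> sum_list xs"
  by (induct xs, auto)

lemma sum_min_eq: "(\<Sum> n \<leftarrow> xs. min (k::nat) n) = sum_list xs \<Longrightarrow> \<forall>x \<in> set xs. x \<le> k"
proof (induct xs)
  case (Cons a xs)
  have "(\<Sum> n \<leftarrow> xs. min k n) \<le> sum_list xs" by (rule sum_min_le)
  with Cons(2) have "min k a = a" "(\<Sum> n \<leftarrow> xs. min k n) = sum_list xs" by auto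
  with Cons(1) show ?case by auto
qed simp

definition sqz_normal :: "nat \<Rightarrow> nat \<Rightarrow> 'a :: {zero,one} mat" where
  "sqz_normal n r = jordan_matrix (replicate r (2, 0) @ replicate (n - 2 * r) (1, 0))"

lemma square_zero_similar_normal:
  assumes C: "(C :: 'a :: field mat) \<in> carrier_mat n n" and CC: "C * C = 0\<^sub>m n n"
  shows "similar_mat C (sqz_normal n (n - kernel.dim n C)) \<and> 2 * (n - kernel.dim n C) \<le> n"
proof -
  have "C ^\<^sub>m 2 = C * C" using C by (simp add: numeral_2_eq_2)
  hence nil: "C ^\<^sub>m 2 = 0\<^sub>m n n" using CC by simp
  from nilpotent_jordan[OF C nil] obtain bs where sim: "similar_mat C (jordan_matrix bs)"
    and bs: "\<forall>x \<in> set bs. snd x = 0 \<and> fst x > 0" and sn: "sum_list (map fst bs) = n" by blast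
  let ?J = "jordan_matrix bs :: 'a mat"
  from sim obtain P Q where wit: "similar_mat_wit C ?J P Q" unfolding similar_mat_def by blast
  have ev: "\<forall>x \<in> set bs. snd x = (0 :: 'a)" using bs by auto
  have J: "?J \<in> carrier_mat n n" using sn by (metis jordan_matrix_carrier)
  from similar_mat_witD2[OF C wit] have P: "P \<in> carrier_mat n n" and Q: "Q \<in> carrier_mat n n"
    and QP: "Q * P = 1\<^sub>m n" and PQ: "P * Q = 1\<^sub>m n" by auto
  have wit2: "similar_mat_wit ?J C Q P" by (rule similar_mat_wit_sym[OF wit])
  have "?J ^\<^sub>m 2 = Q * C ^\<^sub>m 2 * P" by (rule similar_mat_wit_pow_id[OF wit2])
  hence J2: "?J ^\<^sub>m 2 = 0\<^sub>m n n" unfolding nil using P Q by simp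
  have "(\<Sum> n \<leftarrow> map fst bs. min 2 n) = kernel.dim n (?J ^\<^sub>m 2)"
    using kernel_dim_jordan_pow_0[OF ev, of 2] sn by simp
  also have "\<dots> = n" unfolding J2 by (rule kernel_dim_zero_mat)
  finally have "\<forall>x \<in> set (map fst bs). x \<le> 2" using sum_min_eq sn by metis
  hence two: "\<forall>x \<in> set bs. x = (1,0) \<or> x = (2,0)" using bs by force
  have "kernel.dim n C = kernel.dim n ?J" by (rule similar_mat_wit_kernel_dim[OF C wit])
  also have "?J = ?J ^\<^sub>m 1" using J by simp
  also have "kernel.dim n \<dots> = (\<Sum> n \<leftarrow> map fst bs. min 1 n)"
    using kernel_dim_jordan_pow_0[OF ev, of 1] sn by simp
  also have "\<dots> = length bs" using bs by (induct bs, auto)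
  finally have kd: "kernel.dim n C = length bs" .
  define c1 where "c1 = length (filter ((=) (1::nat, 0::'a)) bs)"
  define c2 where "c2 = length (filter ((=) (2::nat, 0::'a)) bs)"
  have m: "mset bs = mset (replicate c1 (1,0) @ replicate c2 (2,0))"
    unfolding c1_def c2_def by (rule mset_two_values[OF two], simp)
  have "length bs = c1 + c2" using arg_cong[OF m, of size] by simp
  moreover have "n = c1 + 2 * c2"
  proof -
    have "sum_list (map fst bs) = sum_mset (image_mset fst (mset bs))"
      by (metis mset_map sum_mset_sum_list)
    also have "\<dots> = c1 + 2 * c2" unfolding m by simp
    finally show ?thesis using sn by simp
  qed
  ultimately have r: "n - kernel.dim n C = c2" "n - 2 * c2 = c1" unfolding kd by auto
  have m2: "mset bs = mset (replicate c2 (2,0) @ replicate (n - 2 * c2) (1,0))" unfolding m r by simp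
  show ?thesis unfolding sqz_normal_def r
    using similar_mat_trans[OF sim similar_jordan_mset[OF m2]] \<open>n = c1 + 2 * c2\<close> by simp
qed

lemma square_zero_similar:
  assumes C: "(C :: 'a :: field mat) \<in> carrier_mat n n" and CC: "C * C = 0\<^sub>m n n"
    and D: "D \<in> carrier_mat n n" and DD: "D * D = 0\<^sub>m n n"
    and eq: "kernel.dim n C = kernel.dim n D"
  shows "similar_mat C D"
  using square_zero_similar_normal[OF C CC] square_zero_similar_normal[OF D DD] eq
  by (metis similar_mat_sym similar_mat_trans)

definition dm :: "nat \<Rightarrow> nat \<Rightarrow> (nat \<Rightarrow> bool) \<Rightarrow> (nat \<Rightarrow> nat) \<Rightarrow> 'a :: zero \<Rightarrow> 'a mat" where
  "dm nr nc P f x = mat nr nc (\<lambda>(i,j). if P i \<and> j = f i then x else 0)"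

lemma dm_carrier[simp]: "dm nr nc P f x \<in> carrier_mat nr nc" unfolding dm_def by simp
lemma dm_dims[simp]: "dim_row (dm nr nc P f x) = nr" "dim_col (dm nr nc P f x) = nc" unfolding dm_def by auto
lemma dm_index[simp]: "i < nr \<Longrightarrow> j < nc \<Longrightarrow> dm nr nc P f x $$ (i,j) = (if P i \<and> j = f i then x else 0)"
  unfolding dm_def by simp

lemma dm_mult: "dm nr n P f (x :: 'a :: semiring_1) * dm n nc Q g y = dm nr nc (\<lambda>i. P i \<and> f i < n \<and> Q (f i)) (\<lambda>i. g (f i)) (x * y)"
proof (rule eq_matI)
  fix i j assume i: "i < dim_row (dm nr nc (\<lambda>i. P i \<and> f i < n \<and> Q (f i)) (\<lambda>i. g (f i)) (x * y))"
    and j: "j < dim_col (dm nr nc (\<lambda>i. P i \<and> f i < n \<and> Q (f i)) (\<lambda>i. g (f i)) (x * y))"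
  hence i: "i < nr" and j: "j < nc" by auto
  have "(dm nr n P f x * dm n nc Q g y) $$ (i,j) = (\<Sum>k = 0..<n. dm nr n P f x $$ (i,k) * dm n nc Q g y $$ (k,j))"
    using i j by (simp add: scalar_prod_def)
  also have "\<dots> = (\<Sum>k = 0..<n. if k = f i then (if P i then x else 0) * dm n nc Q g y $$ (k,j) else 0)"
    by (rule sum.cong, insert i j, auto)
  also have "\<dots> = (if f i < n then (if P i then x else 0) * dm n nc Q g y $$ (f i,j) else 0)"
    by (simp add: sum.delta')
  also have "\<dots> = (if P i \<and> f i < n \<and> Q (f i) \<and> j = g (f i) then x * y else 0)"
    using j by auto
  finally show "(dm nr n P f x * dm n nc Q g y) $$ (i,j) = dm nr nc (\<lambda>i. P i \<and> f i < n \<and> Q (f i)) (\<lambda>i. g (f i)) (x * y) $$ (i, j)"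
    using i j by simp
qed auto

lemma dm_eqI: assumes "\<And>i j. i < nr \<Longrightarrow> j < nc \<Longrightarrow> (P i \<and> j = f i) = (P' i \<and> j = f' i)"
  shows "dm nr nc P f x = dm nr nc P' f' x"
  by (rule eq_matI, insert assms, auto)

lemma dm_uminus: "- dm nr nc P f (x :: 'a :: group_add) = dm nr nc P f (- x)"
  by (rule eq_matI, auto)

lemma dm_add_cancel: assumes "\<And>i j. i < nr \<Longrightarrow> j < nc \<Longrightarrow> (P i \<and> j = f i) = (P' i \<and> j = f' i)"
  shows "dm nr nc P f (x :: 'a :: group_add) + dm nr nc P' f' (- x) = 0\<^sub>m nr nc"
  by (rule eq_matI, insert assms, auto)

lemma dm_zero: assumes "\<And>i j. i < nr \<Longrightarrow> j < nc \<Longrightarrow> \<not> (P i \<and> j = f i)"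
  shows "dm nr nc P f x = 0\<^sub>m nr nc"
  by (rule eq_matI, insert assms, auto)

lemma dm_one: "dm n n (\<lambda>_. True) (\<lambda>i. i) (1 :: 'a :: {zero,one}) = 1\<^sub>m n"
  by (rule eq_matI, auto)

definition sh :: "nat \<Rightarrow> nat \<Rightarrow> 'a :: {zero,one} mat" where
  "sh n p = dm n n (\<lambda>_. True) (\<lambda>i. i + p) 1"

lemma jordan_pow_sh: "(jordan_block n (0 :: 'a :: field)) ^\<^sub>m p = sh n p"
  unfolding jordan_block_zero_pow sh_def dm_def by (rule eq_matI, auto)

lemma jordan_sh: "jordan_block n (0 :: 'a :: field) = sh n 1"
proof -
  have "jordan_block n (0 :: 'a) = (jordan_block n 0) ^\<^sub>m 1" by simp
  thus ?thesis unfolding jordan_pow_sh .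
qed

lemma sh_mult: "sh n p * sh n q = (sh n (p + q) :: 'a :: semiring_1 mat)"
  unfolding sh_def dm_mult mult_1 by (rule dm_eqI, auto)

lemma sh_zero: "n \<le> p \<Longrightarrow> sh n p = 0\<^sub>m n n"
  unfolding sh_def by (rule dm_zero, auto)

lemma sh_carrier[simp]: "sh n p \<in> carrier_mat n n" unfolding sh_def by simp

definition goodm :: "'a :: field mat \<Rightarrow> nat \<Rightarrow> nat \<Rightarrow> bool" where
  "goodm J n m = (\<forall>k \<le> m. \<exists>B. B \<in> carrier_mat n n \<and> J * B = B * J \<and> B * B = 0\<^sub>m n n
      \<and> kernel.dim n B = n - k)"

lemma goodm_single: "goodm (jordan_block s (0 :: 'a :: field)) s (s div 2)"
  unfolding goodm_def
proof (intro allI impI)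
  fix k assume k: "k \<le> s div 2"
  let ?B = "sh s (s - k) :: 'a mat"
  have c1: "jordan_block s 0 * ?B = ?B * jordan_block s 0" unfolding jordan_sh sh_mult
    by (simp add: add.commute)
  have c2: "?B * ?B = 0\<^sub>m s s" unfolding sh_mult using k by (intro sh_zero, linarith)
  have c3: "kernel.dim s ?B = s - k"
    using dim_kernel_zero_jordan_block_pow[of s "s - k"] unfolding jordan_pow_sh by simp
  show "\<exists>B. B \<in> carrier_mat s s \<and> jordan_block s (0::'a) * B = B * jordan_block s 0 \<and>
      B * B = 0\<^sub>m s s \<and> kernel.dim s B = s - k"
    by (rule exI[of _ ?B], intro conjI, rule sh_carrier, fact c1, fact c2, fact c3)
qed


lemma goodm_similar:
  assumes sim: "similar_mat A J" and J: "J \<in> carrier_mat n n" and g: "goodm J n m"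
  shows "goodm A n m"
  unfolding goodm_def
proof (intro allI impI)
  fix k assume k: "k \<le> m"
  from g k obtain B where B: "B \<in> carrier_mat n n" and JB: "J * B = B * J" and BB: "B * B = 0\<^sub>m n n"
    and kd: "kernel.dim n B = n - k" unfolding goodm_def by blast
  from sim obtain P Q where wit: "similar_mat_wit A J P Q" unfolding similar_mat_def by blast
  have "J \<in> carrier_mat (dim_row A) (dim_row A)" by (rule similar_mat_witD(5)[OF refl wit])
  hence "dim_row A = n" using carrier_matD(1)[OF J] carrier_matD(1) by metis
  hence A: "A \<in> carrier_mat n n" using similar_mat_witD(4)[OF refl wit] by (simp only:)
  from similar_mat_witD2[OF A wit] have P: "P \<in> carrier_mat n n" and Q: "Q \<in> carrier_mat n n"
    and PQ: "P * Q = 1\<^sub>m n" and QP: "Q * P = 1\<^sub>m n" and AJ: "A = P * J * Q" by auto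
  define B' where "B' = P * B * Q"
  have B': "B' \<in> carrier_mat n n" unfolding B'_def using P B Q by auto
  have mult: "P * X * Q * (P * Y * Q) = P * (X * Y) * Q" if X: "X \<in> carrier_mat n n" and Y: "Y \<in> carrier_mat n n" for X Y
  proof -
    have "P * X * Q * (P * Y * Q) = P * X * (Q * P) * Y * Q"
      using P Q X Y by (simp add: assoc_mult_mat[of _ n n _ n _ n])
    also have "\<dots> = P * (X * Y) * Q" unfolding QP using P Q X Y by (simp add: assoc_mult_mat[of _ n n _ n _ n])
    finally show ?thesis .
  qed
  have c1: "A * B' = B' * A" unfolding AJ B'_def mult[OF J B] mult[OF B J] JB ..
  have c2: "B' * B' = 0\<^sub>m n n" unfolding B'_def mult[OF B B] BB using P Q by simp
  have c3: "kernel.dim n B' = n - k"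
  proof -
    have "similar_mat_wit B' B P Q" unfolding B'_def by (rule similar_mat_witI[OF PQ QP refl], insert B P Q, auto)
    from similar_mat_wit_kernel_dim[OF B' this] kd show ?thesis by simp
  qed
  show "\<exists>B. B \<in> carrier_mat n n \<and> A * B = B * A \<and> B * B = 0\<^sub>m n n \<and> kernel.dim n B = n - k"
    by (rule exI[of _ B'], intro conjI, rule B', fact c1, fact c2, fact c3)
qed

lemma goodm_combine:
  assumes X: "X \<in> carrier_mat n1 n1" and Y: "Y \<in> carrier_mat n2 n2"
    and gX: "goodm X n1 m1" and gY: "goodm Y n2 m2" and m1: "m1 \<le> n1" and m2: "m2 \<le> n2"
  shows "goodm (FBd X Y) (n1 + n2) (m1 + m2)"
  unfolding goodm_def
proof (intro allI impI)
  fix k assume k: "k \<le> m1 + m2"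
  define k1 where "k1 = min k m1"
  define k2 where "k2 = k - k1"
  have k12: "k1 \<le> m1" "k2 \<le> m2" "k = k1 + k2" unfolding k1_def k2_def using k by auto
  from gX k12 obtain B1 where B1: "B1 \<in> carrier_mat n1 n1" and XB: "X * B1 = B1 * X" and BB1: "B1 * B1 = 0\<^sub>m n1 n1"
    and kd1: "kernel.dim n1 B1 = n1 - k1" unfolding goodm_def by blast
  from gY k12 obtain B2 where B2: "B2 \<in> carrier_mat n2 n2" and YB: "Y * B2 = B2 * Y" and BB2: "B2 * B2 = 0\<^sub>m n2 n2"
    and kd2: "kernel.dim n2 B2 = n2 - k2" unfolding goodm_def by blast
  define B where "B = four_block_mat B1 (0\<^sub>m n1 n2) (0\<^sub>m n2 n1) B2"
  have FB: "FBd X Y = four_block_mat X (0\<^sub>m n1 n2) (0\<^sub>m n2 n1) Y" using X Y by simp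
  have B: "B \<in> carrier_mat (n1+n2) (n1+n2)" unfolding B_def using B1 B2 by simp
  have "FBd X Y * B = four_block_mat (X * B1) (0\<^sub>m n1 n2) (0\<^sub>m n2 n1) (Y * B2)"
    unfolding FB B_def by (subst mult_four_block_mat[OF X zero_carrier_mat zero_carrier_mat Y B1 zero_carrier_mat zero_carrier_mat B2],
      insert X Y B1 B2, simp_all)
  moreover have "B * FBd X Y = four_block_mat (B1 * X) (0\<^sub>m n1 n2) (0\<^sub>m n2 n1) (B2 * Y)"
    unfolding FB B_def by (subst mult_four_block_mat[OF B1 zero_carrier_mat zero_carrier_mat B2 X zero_carrier_mat zero_carrier_mat Y],
      insert X Y B1 B2, simp_all)
  ultimately have comm: "FBd X Y * B = B * FBd X Y" unfolding XB YB by simp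
  have "B * B = four_block_mat (B1 * B1) (0\<^sub>m n1 n2) (0\<^sub>m n2 n1) (B2 * B2)"
    unfolding B_def by (subst mult_four_block_mat[OF B1 zero_carrier_mat zero_carrier_mat B2 B1 zero_carrier_mat zero_carrier_mat B2],
      insert B1 B2, simp_all)
  hence sq: "B * B = 0\<^sub>m (n1+n2) (n1+n2)" unfolding BB1 BB2 by simp
  have "kernel.dim (n1 + n2) B = kernel.dim n1 B1 + kernel.dim n2 B2"
    by (rule kernel_four_block_0_mat[OF B_def B1 B2])
  hence "kernel.dim (n1 + n2) B = n1 + n2 - k" unfolding kd1 kd2 using k12 m1 m2 by simp
  thus "\<exists>B. B \<in> carrier_mat (n1 + n2) (n1 + n2) \<and> FBd X Y * B = B * FBd X Y \<and>
      B * B = 0\<^sub>m (n1 + n2) (n1 + n2) \<and> kernel.dim (n1 + n2) B = n1 + n2 - k"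
    using B comm sq by blast
qed

definition shv :: "nat \<Rightarrow> nat \<Rightarrow> 'a :: {zero,one} \<Rightarrow> 'a mat" where
  "shv n p x = dm n n (\<lambda>_. True) (\<lambda>i. i + p) x"
definition pE :: "nat \<Rightarrow> nat \<Rightarrow> 'a :: zero \<Rightarrow> 'a mat" where
  "pE a b x = dm a b (\<lambda>_. True) (\<lambda>i. i) x"
definition pT :: "nat \<Rightarrow> nat \<Rightarrow> nat \<Rightarrow> 'a :: zero \<Rightarrow> 'a mat" where
  "pT b a e x = dm b a (\<lambda>_. True) (\<lambda>i. i + e) x"
definition pE' :: "nat \<Rightarrow> nat \<Rightarrow> nat \<Rightarrow> 'a :: {zero,one} mat" where
  "pE' a b d = dm a b (\<lambda>i. d \<le> i) (\<lambda>i. i - d) 1"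

lemmas pdefs = shv_def pE_def pT_def pE'_def

lemma sh_shv: "sh n p = shv n p 1" unfolding sh_def shv_def ..

lemma add_0_right_dims[simp]: "dim_row A = nr \<Longrightarrow> dim_col A = nc \<Longrightarrow> A + 0\<^sub>m nr nc = (A :: 'a::monoid_add mat)"
  by (rule eq_matI, auto)
lemma add_0_left_dims[simp]: "dim_row A = nr \<Longrightarrow> dim_col A = nc \<Longrightarrow> 0\<^sub>m nr nc + A = (A :: 'a::monoid_add mat)"
  by (rule eq_matI, auto)
lemma uminus_zero_mat'[simp]: "- 0\<^sub>m n m = (0\<^sub>m n m :: 'a :: group_add mat)"
  by (rule eq_matI, auto)

lemma shv_carrier[simp]: "shv n p x \<in> carrier_mat n n" unfolding shv_def by simp
lemma pE_carrier[simp]: "pE a b x \<in> carrier_mat a b" unfolding pE_def by simp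
lemma pT_carrier[simp]: "pT b a e x \<in> carrier_mat b a" unfolding pT_def by simp
lemma pE'_carrier[simp]: "pE' a b d \<in> carrier_mat a b" unfolding pE'_def by simp
lemma shv_dims[simp]: "dim_row (shv n p x) = n" "dim_col (shv n p x) = n" unfolding shv_def by auto
lemma pE_dims[simp]: "dim_row (pE a b x) = a" "dim_col (pE a b x) = b" unfolding pE_def by auto
lemma pT_dims[simp]: "dim_row (pT b a e x) = b" "dim_col (pT b a e x) = a" unfolding pT_def by auto
lemma pE'_dims[simp]: "dim_row (pE' a b d) = a" "dim_col (pE' a b d) = b" unfolding pE'_def by auto

definition "Bp a b d = four_block_mat (shv a d (1 :: 'a :: field)) (pE a b (-1)) (pT b a (2*d) 1) (shv b d (-1))"
definition "Jp a b = four_block_mat (shv a 1 (1 :: 'a :: field)) (0\<^sub>m a b) (0\<^sub>m b a) (shv b 1 1)"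

context
  fixes a b d :: nat
  assumes ab: "a = b + 2 * d"
begin

lemma dm_add_cancel': assumes "\<And>i j. i < nr \<Longrightarrow> j < nc \<Longrightarrow> (P i \<and> j = f i) = (P' i \<and> j = f' i)"
  shows "dm nr nc P f (- x :: 'a :: group_add) + dm nr nc P' f' x = 0\<^sub>m nr nc"
  by (rule eq_matI, insert assms, auto)

lemma c12: "shv a 1 (1 :: 'a :: ring_1) * pE a b (-1) = pE a b (-1) * shv b 1 1"
  unfolding pdefs dm_mult by (simp, rule dm_eqI, insert ab, auto)

lemma c11: "shv a 1 (1 :: 'a :: ring_1) * shv a d 1 = shv a d 1 * shv a 1 1"
  unfolding pdefs dm_mult by (simp, rule dm_eqI, insert ab, auto)
lemma c21: "shv b 1 (1 :: 'a :: ring_1) * pT b a (2*d) 1 = pT b a (2*d) 1 * shv a 1 1"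
  unfolding pdefs dm_mult by (simp, rule dm_eqI, insert ab, auto)
lemma c22: "shv b 1 (1 :: 'a :: ring_1) * shv b d (-1) = shv b d (-1) * shv b 1 1"
  unfolding pdefs dm_mult by (simp, rule dm_eqI, insert ab, auto)
lemma s11: "shv a d (1 :: 'a :: ring_1) * shv a d 1 + pE a b (-1) * pT b a (2*d) 1 = 0\<^sub>m a a"
  unfolding pdefs dm_mult by (simp, (rule dm_add_cancel | rule dm_add_cancel'), insert ab, auto)
lemma s12: "shv a d (1 :: 'a :: ring_1) * pE a b (-1) + pE a b (-1) * shv b d (-1) = 0\<^sub>m a b"
  unfolding pdefs dm_mult by (simp, (rule dm_add_cancel | rule dm_add_cancel'), insert ab, auto)
lemma s21: "pT b a (2*d) (1 :: 'a :: ring_1) * shv a d 1 + shv b d (-1) * pT b a (2*d) 1 = 0\<^sub>m b a"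
  unfolding pdefs dm_mult by (simp, (rule dm_add_cancel | rule dm_add_cancel'), insert ab, auto)
lemma s22: "pT b a (2*d) (1 :: 'a :: ring_1) * pE a b (-1) + shv b d (-1) * shv b d (-1) = 0\<^sub>m b b"
  unfolding pdefs dm_mult by (simp, (rule dm_add_cancel | rule dm_add_cancel'), insert ab, auto)
lemma u12: "shv a d (1 :: 'a :: ring_1) * pE' a b d + pE a b (-1) = 0\<^sub>m a b"
  unfolding pdefs dm_mult by (simp, (rule dm_add_cancel | rule dm_add_cancel'), insert ab, auto)
lemma u22: "pT b a (2*d) (1 :: 'a :: ring_1) * pE' a b d + shv b d (-1) = 0\<^sub>m b b"
  unfolding pdefs dm_mult by (simp, (rule dm_add_cancel | rule dm_add_cancel'), insert ab, auto)
lemma l21: "pT b a d (-1 :: 'a :: ring_1) * shv a d 1 + pT b a (2*d) 1 = 0\<^sub>m b a"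
  unfolding pdefs dm_mult by (simp, (rule dm_add_cancel | rule dm_add_cancel'), insert ab, auto)


lemma Bp_carrier: "(Bp a b d :: 'a :: field mat) \<in> carrier_mat (a+b) (a+b)" unfolding Bp_def by simp

lemma Jp_Bp: "(Jp a b :: 'a :: field mat) * Bp a b d = Bp a b d * Jp a b"
proof -
  have "(Jp a b :: 'a mat) * Bp a b d = four_block_mat (shv a 1 1 * shv a d 1) (shv a 1 1 * pE a b (-1))
     (shv b 1 1 * pT b a (2*d) 1) (shv b 1 1 * shv b d (-1))"
    unfolding Jp_def Bp_def
    by (subst mult_four_block_mat[OF shv_carrier zero_carrier_mat zero_carrier_mat shv_carrier
      shv_carrier pE_carrier pT_carrier shv_carrier], simp)
  moreover have "Bp a b d * (Jp a b :: 'a mat) = four_block_mat (shv a d 1 * shv a 1 1) (pE a b (-1) * shv b 1 1)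
     (pT b a (2*d) 1 * shv a 1 1) (shv b d (-1) * shv b 1 1)"
    unfolding Jp_def Bp_def
    by (subst mult_four_block_mat[OF shv_carrier pE_carrier pT_carrier shv_carrier
      shv_carrier zero_carrier_mat zero_carrier_mat shv_carrier], simp)
  ultimately show ?thesis unfolding c11 c12 c21 c22 by simp
qed

lemma Bp_sq: "(Bp a b d :: 'a :: field mat) * Bp a b d = 0\<^sub>m (a+b) (a+b)"
proof -
  have "(Bp a b d :: 'a mat) * Bp a b d = four_block_mat (shv a d 1 * shv a d 1 + pE a b (-1) * pT b a (2*d) 1)
     (shv a d 1 * pE a b (-1) + pE a b (-1) * shv b d (-1))
     (pT b a (2*d) 1 * shv a d 1 + shv b d (-1) * pT b a (2*d) 1)
     (pT b a (2*d) 1 * pE a b (-1) + shv b d (-1) * shv b d (-1))"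
    unfolding Bp_def
    by (rule mult_four_block_mat[OF shv_carrier pE_carrier pT_carrier shv_carrier
      shv_carrier pE_carrier pT_carrier shv_carrier])
  thus ?thesis unfolding s11 s12 s21 s22 by simp
qed

lemma Bp_kernel: "kernel.dim (a+b) (Bp a b d :: 'a :: field mat) = b + d"
proof -
  define U where "U = four_block_mat (1\<^sub>m a) (pE' a b d) (0\<^sub>m b a) (1\<^sub>m b :: 'a mat)"
  define U' where "U' = four_block_mat (1\<^sub>m a) (- pE' a b d) (0\<^sub>m b a) (1\<^sub>m b :: 'a mat)"
  have U: "U \<in> carrier_mat (a+b) (a+b)" unfolding U_def by simp
  have U': "U' \<in> carrier_mat (a+b) (a+b)" unfolding U'_def by simp
  have "U * U' = four_block_mat (1\<^sub>m a * 1\<^sub>m a + pE' a b d * 0\<^sub>m b a) (1\<^sub>m a * (- pE' a b d) + pE' a b d * 1\<^sub>m b)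
     (0\<^sub>m b a * 1\<^sub>m a + 1\<^sub>m b * 0\<^sub>m b a) (0\<^sub>m b a * (- pE' a b d) + 1\<^sub>m b * 1\<^sub>m b)"
    unfolding U_def U'_def
    by (rule mult_four_block_mat, auto)
  also have "\<dots> = 1\<^sub>m (a+b)"
  proof -
    have e: "1\<^sub>m a * (- pE' a b d) + pE' a b d * 1\<^sub>m b = (0\<^sub>m a b :: 'a mat)"
      by (rule eq_matI, auto)
    show ?thesis unfolding e by simp
  qed
  finally have UU': "U * U' = 1\<^sub>m (a+b)" .
  have "kernel.dim (a+b) (Bp a b d * U) = kernel.dim (a+b) (Bp a b d :: 'a mat)"
    by (rule mat_kernel_dim_mult_eq_right[OF Bp_carrier U U' UU'])
  moreover have "Bp a b d * U = four_block_mat (shv a d 1) (0\<^sub>m a b) (pT b a (2*d) 1) (0\<^sub>m b b :: 'a mat)"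
  proof -
    have "Bp a b d * U = four_block_mat (shv a d 1 * 1\<^sub>m a + pE a b (-1) * 0\<^sub>m b a)
      (shv a d 1 * pE' a b d + pE a b (-1) * 1\<^sub>m b)
      (pT b a (2*d) 1 * 1\<^sub>m a + shv b d (-1) * 0\<^sub>m b a)
      (pT b a (2*d) 1 * pE' a b d + shv b d (-1) * 1\<^sub>m b)"
      unfolding Bp_def U_def
      by (rule mult_four_block_mat[OF shv_carrier pE_carrier pT_carrier shv_carrier], auto)
    also have "\<dots> = four_block_mat (shv a d 1) (0\<^sub>m a b) (pT b a (2*d) 1) (0\<^sub>m b b)"
    proof -
      have e1: "shv a d 1 * pE' a b d + pE a b (-1) * 1\<^sub>m b = (0\<^sub>m a b :: 'a mat)"
        using u12 by simp
      have e2: "pT b a (2*d) 1 * pE' a b d + shv b d (-1) * 1\<^sub>m b = (0\<^sub>m b b :: 'a mat)"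
        using u22 by simp
      show ?thesis unfolding e1 e2 by simp
    qed
    finally show ?thesis .
  qed
  ultimately have k1: "kernel.dim (a+b) (four_block_mat (shv a d 1) (0\<^sub>m a b) (pT b a (2*d) 1) (0\<^sub>m b b :: 'a mat))
     = kernel.dim (a+b) (Bp a b d :: 'a mat)" by simp
  define C where "C = four_block_mat (shv a d 1) (0\<^sub>m a b) (pT b a (2*d) 1) (0\<^sub>m b b :: 'a mat)"
  have C: "C \<in> carrier_mat (a+b) (a+b)" unfolding C_def by simp
  define L where "L = four_block_mat (1\<^sub>m a) (0\<^sub>m a b) (pT b a d (-1)) (1\<^sub>m b :: 'a mat)"
  define L' where "L' = four_block_mat (1\<^sub>m a) (0\<^sub>m a b) (pT b a d 1) (1\<^sub>m b :: 'a mat)"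
  have L: "L \<in> carrier_mat (a+b) (a+b)" unfolding L_def by simp
  have L': "L' \<in> carrier_mat (a+b) (a+b)" unfolding L'_def by simp
  have "L' * L = four_block_mat (1\<^sub>m a * 1\<^sub>m a + 0\<^sub>m a b * pT b a d (-1)) (1\<^sub>m a * 0\<^sub>m a b + 0\<^sub>m a b * 1\<^sub>m b)
     (pT b a d 1 * 1\<^sub>m a + 1\<^sub>m b * pT b a d (-1)) (pT b a d 1 * 0\<^sub>m a b + 1\<^sub>m b * 1\<^sub>m b)"
    unfolding L_def L'_def by (rule mult_four_block_mat, auto)
  also have "\<dots> = 1\<^sub>m (a+b)"
  proof -
    have e: "pT b a d 1 * 1\<^sub>m a + 1\<^sub>m b * pT b a d (-1) = (0\<^sub>m b a :: 'a mat)"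
      unfolding pT_def by (rule eq_matI, auto)
    show ?thesis unfolding e by simp
  qed
  finally have L'L: "L' * L = 1\<^sub>m (a+b)" .
  have "mat_kernel (L * C) = mat_kernel C" by (rule mat_kernel_mult_eq[OF C L L' L'L])
  hence k2: "kernel.dim (a+b) (L * C) = kernel.dim (a+b) C" by simp
  have "L * C = four_block_mat (1\<^sub>m a * shv a d 1 + 0\<^sub>m a b * pT b a (2*d) 1) (1\<^sub>m a * 0\<^sub>m a b + 0\<^sub>m a b * 0\<^sub>m b b)
     (pT b a d (-1) * shv a d 1 + 1\<^sub>m b * pT b a (2*d) 1) (pT b a d (-1) * 0\<^sub>m a b + 1\<^sub>m b * 0\<^sub>m b b)"
    unfolding L_def C_def by (rule mult_four_block_mat, auto)
  also have "\<dots> = four_block_mat (shv a d 1) (0\<^sub>m a b) (0\<^sub>m b a) (0\<^sub>m b b)"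
  proof -
    have e: "pT b a d (-1) * shv a d 1 + 1\<^sub>m b * pT b a (2*d) 1 = (0\<^sub>m b a :: 'a mat)"
      using l21 by simp
    show ?thesis unfolding e by simp
  qed
  finally have LC: "L * C = four_block_mat (shv a d 1) (0\<^sub>m a b) (0\<^sub>m b a) (0\<^sub>m b b)" .
  have "kernel.dim (a+b) (L * C) = kernel.dim a (shv a d (1::'a)) + kernel.dim b (0\<^sub>m b b :: 'a mat)"
    by (rule kernel_four_block_0_mat[OF LC shv_carrier zero_carrier_mat])
  also have "kernel.dim a (shv a d (1::'a)) = d"
    using dim_kernel_zero_jordan_block_pow[of a d] ab unfolding jordan_pow_sh sh_shv by simp
  also have "kernel.dim b (0\<^sub>m b b :: 'a mat) = b" by (rule kernel_dim_zero_mat)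
  finally show ?thesis using k1 k2 unfolding C_def by simp
qed

end

lemma odd_sum_list_ex: "odd (sum_list (xs :: nat list)) \<Longrightarrow> \<exists>x \<in> set xs. odd x"
  by (induct xs, auto)

lemma FBd_jordan: "FBd (jordan_block a (0 :: 'a :: field)) (jordan_block b 0) = Jp a b"
  unfolding Jp_def jordan_sh sh_shv by simp

lemma goodm_pair:
  assumes ab: "a = b + 2 * d"
  shows "goodm (FBd (jordan_block a (0 :: 'a :: field)) (jordan_block b 0)) (a+b) ((a+b) div 2)"
  unfolding goodm_def
proof (intro allI impI)
  fix k assume k: "k \<le> (a+b) div 2"
  show "\<exists>B. B \<in> carrier_mat (a + b) (a + b) \<and>
      FBd (jordan_block a 0) (jordan_block b (0::'a)) * B = B * FBd (jordan_block a 0) (jordan_block b 0) \<and>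
      B * B = 0\<^sub>m (a + b) (a + b) \<and> kernel.dim (a + b) B = a + b - k"
  proof (cases "k = (a+b) div 2")
    case True
    have kd: "kernel.dim (a+b) (Bp a b d :: 'a mat) = a + b - k"
      unfolding Bp_kernel[OF ab] True using ab by simp
    show ?thesis unfolding FBd_jordan
      by (rule exI[of _ "Bp a b d"], intro conjI, rule Bp_carrier[OF ab], rule Jp_Bp[OF ab], rule Bp_sq[OF ab], rule kd)
  next
    case False
    with k ab have k2: "k \<le> a div 2 + b div 2" by presburger
    have g: "goodm (FBd (jordan_block a (0 :: 'a)) (jordan_block b 0)) (a+b) (a div 2 + b div 2)"
      by (rule goodm_combine[OF jordan_block_carrier jordan_block_carrier goodm_single goodm_single], auto)
    from g[unfolded goodm_def, rule_format, OF k2] show ?thesis .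
  qed
qed


lemma jordan_matrix_Cons': "jordan_matrix ((s,e) # bs) = FBd (jordan_block s e) (jordan_matrix bs)"
  unfolding jordan_matrix_def diag_block_mat_Cons' by (simp add: Let_def)

lemma goodm_jordan:
  assumes "\<forall>x \<in> set bs. snd x = (0 :: 'a :: field)"
  shows "goodm (jordan_matrix bs) (sum_list (map fst bs)) (sum_list (map fst bs) div 2)"
  using assms
proof (induct "length bs" arbitrary: bs rule: less_induct)
  case less
  show ?case
  proof (cases bs)
    case Nil
    have "jordan_matrix bs = (0\<^sub>m 0 0 :: 'a mat)" unfolding Nil jordan_matrix_def by simp
    thus ?thesis unfolding goodm_def Nil
      using kernel_dim_zero_mat[of 0, where 'a='a] by (intro allI impI exI[of _ "0\<^sub>m 0 0"], auto)
  next
    case (Cons x rest)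
    obtain s e where x: "x = (s,e)" by force
    with less(2) Cons have e: "e = 0" by auto
    let ?r = "sum_list (map fst rest)"
    have IH: "goodm (jordan_matrix cs) (sum_list (map fst cs)) (sum_list (map fst cs) div 2)"
      if "length cs < length bs" "\<forall>x \<in> set cs. snd x = (0 :: 'a)" for cs
      using less(1) that by blast
    have bs: "bs = (s,0) # rest" using Cons x e by simp
    have n: "sum_list (map fst bs) = s + ?r" unfolding bs by simp
    have Jr: "jordan_matrix rest \<in> carrier_mat ?r ?r" by simp
    have IHr: "goodm (jordan_matrix rest) ?r (?r div 2)" by (rule IH, insert less(2) bs, auto)
    show ?thesis
    proof (cases "even s \<or> even ?r")
      case True
      have "goodm (FBd (jordan_block s (0::'a)) (jordan_matrix rest)) (s + ?r) (s div 2 + ?r div 2)"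
        by (rule goodm_combine[OF jordan_block_carrier Jr goodm_single IHr], auto)
      moreover have "s div 2 + ?r div 2 = (s + ?r) div 2" using True by presburger
      ultimately show ?thesis unfolding n bs jordan_matrix_Cons' by simp
    next
      case False
      hence os: "odd s" and or: "odd ?r" by auto
      from odd_sum_list_ex[OF or] obtain b where b: "b \<in> set (map fst rest)" and ob: "odd b" by blast
      from b obtain y where y: "y \<in> set rest" "fst y = b" by auto
      with less(2) bs have y0: "y = (b, 0)" by (cases y, auto)
      from split_list[OF y(1)[unfolded y0]] obtain ys zs where rest: "rest = ys @ (b,0) # zs" by blast
      define rest' where "rest' = ys @ zs"
      let ?r' = "sum_list (map fst rest')"
      have r: "?r = b + ?r'" unfolding rest rest'_def by simp
      have m: "mset bs = mset ((s,0) # (b,0) # rest')" unfolding bs rest rest'_def by simp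
      have sim1: "similar_mat (jordan_matrix bs) (jordan_matrix ((s,0) # (b,0) # rest'))"
        by (rule similar_jordan_mset[OF m])
      have eqJ: "jordan_matrix ((s,0) # (b,0) # rest') = FBd (FBd (jordan_block s (0::'a)) (jordan_block b 0)) (jordan_matrix rest')"
        unfolding jordan_matrix_Cons' FBd_assoc ..
      have Jr': "jordan_matrix rest' \<in> carrier_mat ?r' ?r'" by simp
      have IHr': "goodm (jordan_matrix rest') ?r' (?r' div 2)"
        by (rule IH, insert less(2) bs rest rest'_def, auto)
      have gsb: "goodm (FBd (jordan_block s (0::'a)) (jordan_block b 0)) (s+b) ((s+b) div 2)"
      proof (cases "b \<le> s")
        case True
        define d where "d = (s - b) div 2"
        have "s = b + 2 * d" unfolding d_def using True os ob by presburger
        thus ?thesis by (rule goodm_pair)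
      next
        case False
        define d where "d = (b - s) div 2"
        have "b = s + 2 * d" unfolding d_def using False os ob by presburger
        from goodm_pair[OF this, where 'a='a] have g: "goodm (FBd (jordan_block b (0::'a)) (jordan_block s 0)) (s+b) ((s+b) div 2)"
          by (simp add: add.commute)
        have sw: "similar_mat (FBd (jordan_block s (0::'a)) (jordan_block b 0)) (FBd (jordan_block b 0) (jordan_block s 0))"
          by (rule similar_FBd_swap[OF jordan_block_carrier jordan_block_carrier])
        have "FBd (jordan_block b (0::'a)) (jordan_block s 0) \<in> carrier_mat (b+s) (b+s)" by simp
        hence c: "FBd (jordan_block b (0::'a)) (jordan_block s 0) \<in> carrier_mat (s+b) (s+b)" by (simp only: add.commute)
        show ?thesis by (rule goodm_similar[OF sw c g])
      qed
      have FBsb: "FBd (jordan_block s (0::'a)) (jordan_block b 0) \<in> carrier_mat (s+b) (s+b)" by simp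
      have g2: "goodm (FBd (FBd (jordan_block s (0::'a)) (jordan_block b 0)) (jordan_matrix rest')) ((s+b) + ?r') ((s+b) div 2 + ?r' div 2)"
        by (rule goodm_combine[OF FBsb Jr' gsb IHr'], auto)
      have e1: "(s+b) div 2 + ?r' div 2 = (s + ?r) div 2" using os ob or r by presburger
      have e2: "(s+b) + ?r' = s + ?r" using r by simp
      have g3: "goodm (jordan_matrix ((s,0) # (b,0) # rest')) (s + ?r) ((s + ?r) div 2)"
        using g2 unfolding eqJ e1 e2 .
      have "jordan_matrix ((s,0) # (b,0) # rest') \<in> carrier_mat (s + ?r) (s + ?r)"
        using jordan_matrix_carrier[of "(s,0) # (b,0) # rest'"] r by (simp add: add.assoc)
      from goodm_similar[OF sim1 this g3] show ?thesis unfolding n .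
    qed
  qed
qed



lemma part1:
  assumes A: "(A :: 'a :: field mat) \<in> carrier_mat n n" and nil: "nilpotent_mat A" and k: "2 * k \<le> n"
  shows "\<exists>B. B \<in> carrier_mat n n \<and> A * B = B * A \<and> B * B = 0\<^sub>m n n \<and> kernel.dim n B = n - k"
proof -
  from nil obtain m where "A ^\<^sub>m m = 0\<^sub>m (dim_row A) (dim_col A)" unfolding nilpotent_mat_def by blast
  hence Am: "A ^\<^sub>m m = 0\<^sub>m n n" using A by simp
  from nilpotent_jordan[OF A Am] obtain bs where sim: "similar_mat A (jordan_matrix bs)"
    and bs: "\<forall>x \<in> set bs. snd x = 0 \<and> fst x > 0" and sn: "sum_list (map fst bs) = n" by blast
  have "goodm (jordan_matrix bs) (sum_list (map fst bs)) (sum_list (map fst bs) div 2)"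
    by (rule goodm_jordan, insert bs, auto)
  hence g: "goodm (jordan_matrix bs) n (n div 2)" unfolding sn .
  have J: "jordan_matrix bs \<in> carrier_mat n n" using jordan_matrix_carrier[of bs] unfolding sn .
  from goodm_similar[OF sim J g] k show ?thesis unfolding goodm_def by auto
qed

theorem corollary2p5:
  fixes n :: nat
  shows
   "(\<forall>(A :: 'a :: {alg_closed_field, field_char_0} mat) k.
        A \<in> carrier_mat n n \<longrightarrow> nilpotent_mat A \<longrightarrow> 2 * k \<le> n \<longrightarrow>
        (\<exists>B. B \<in> carrier_mat n n \<and> A * B = B * A \<and> B * B = 0\<^sub>m n n \<and>
             vec_space.rank n B = k))
    \<and>
    (\<forall>(A :: 'a mat) B k.
        A \<in> carrier_mat n n \<longrightarrow> B \<in> carrier_mat n n \<longrightarrow>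
        nilpotent_mat A \<longrightarrow> nilpotent_mat B \<longrightarrow> 2 * k \<le> n \<longrightarrow>
        (\<exists>C P Pinv. C \<in> carrier_mat n n \<and> C * C = 0\<^sub>m n n \<and> vec_space.rank n C = k \<and>
             P \<in> carrier_mat n n \<and> Pinv \<in> carrier_mat n n \<and>
             P * Pinv = 1\<^sub>m n \<and> Pinv * P = 1\<^sub>m n \<and>
             A * C = C * A \<and> (P * C * Pinv) * B = B * (P * C * Pinv)))"
proof (intro conjI allI impI)
  fix A :: "'a mat" and k
  assume A: "A \<in> carrier_mat n n" and nil: "nilpotent_mat A" and k: "2 * k \<le> n"
  from part1[OF A nil k] obtain B where B: "B \<in> carrier_mat n n" and AB: "A * B = B * A"
    and BB: "B * B = 0\<^sub>m n n" and kd: "kernel.dim n B = n - k" by blast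
  have "vec_space.rank n B = k" using rank_plus_kernel_dim[OF B] kd k by simp
  thus "\<exists>B. B \<in> carrier_mat n n \<and> A * B = B * A \<and> B * B = 0\<^sub>m n n \<and> vec_space.rank n B = k"
    using B AB BB by blast
next
  fix A B :: "'a mat" and k
  assume A: "A \<in> carrier_mat n n" and B: "B \<in> carrier_mat n n" and nilA: "nilpotent_mat A"
    and nilB: "nilpotent_mat B" and k: "2 * k \<le> n"
  from part1[OF A nilA k] obtain C where C: "C \<in> carrier_mat n n" and AC: "A * C = C * A"
    and CC: "C * C = 0\<^sub>m n n" and kdC: "kernel.dim n C = n - k" by blast
  from part1[OF B nilB k] obtain D where D: "D \<in> carrier_mat n n" and BD: "B * D = D * B"
    and DD: "D * D = 0\<^sub>m n n" and kdD: "kernel.dim n D = n - k" by blast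
  have "similar_mat D C" by (rule square_zero_similar[OF D DD C CC], simp add: kdC kdD)
  then obtain P Q where wit: "similar_mat_wit D C P Q" unfolding similar_mat_def by blast
  from similar_mat_witD2[OF D wit] have P: "P \<in> carrier_mat n n" and Q: "Q \<in> carrier_mat n n"
    and PQ: "P * Q = 1\<^sub>m n" and QP: "Q * P = 1\<^sub>m n" and DPC: "D = P * C * Q" by auto
  have rk: "vec_space.rank n C = k" using rank_plus_kernel_dim[OF C] kdC k by simp
  have comm: "(P * C * Q) * B = B * (P * C * Q)" unfolding DPC[symmetric] using BD by simp
  show "\<exists>C P Pinv. C \<in> carrier_mat n n \<and> C * C = 0\<^sub>m n n \<and> vec_space.rank n C = k \<and>
             P \<in> carrier_mat n n \<and> Pinv \<in> carrier_mat n n \<and>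
             P * Pinv = 1\<^sub>m n \<and> Pinv * P = 1\<^sub>m n \<and>
             A * C = C * A \<and> (P * C * Pinv) * B = B * (P * C * Pinv)"
    by (rule exI[of _ C], rule exI[of _ P], rule exI[of _ Q], intro conjI, fact C, fact CC, fact rk,
      fact P, fact Q, fact PQ, fact QP, fact AC, fact comm)
qed

end
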